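(* Assume $\epsilon(s,a)\ge0$ for all $(s,a)$, and let $\hat J^*\in\mathbb{R}^N$ be a fixed point of the $\ell_1$ extended value iteration operator $\hat U$ with $\hat J^*\ge0$. Then the operator $\hat U^{\dagger,0}$ has a fixed point in the set $$X=\{x\in\mathbb{R}^N:\ \min_{a\in\mathcal A(s)}c(s,a)\le x_s\le \hat J^*_s\ \ \forall s=1,\dots,N\}.$$
   Context: SSP data: states $\mathcal S=\{1,\dots,N\}$, finite action sets $\mathcal A(s)$, costs $c(s,a)\in[0,1]$, an estimated substochastic transition function $\hat P(s'|s,a)\ge0$ with $\sum_{s'\in\mathcal S}\hat P(s'|s,a)\le1$, and radii $\epsilon(s,a)\ge0$. The $\ell_1$ extended value iteration operator is $(\hat Ux)_s=\min_{a\in\mathcal A(s)}\{c(s,a)+\min_{\tilde p}\sum_{s'}\tilde p_{s'}x_{s'}\}$, the inner minimum over $\tilde p\in\mathbb{R}^N$ with $\tilde p\ge0$, $\sum_{s'}\tilde p_{s'}\le1$, $\lVert\tilde p-\hat P(\cdot|s,a)\rVert_1\le\epsilon(s,a)$. The operator $\hat U^{\dagger,0}:\mathbb{R}^N\to\mathbb{R}^N$ is $$(\hat U^{\dagger,0}x)_s=\min_{a\in\mathcal A(s)}\Big\{c(s,a)+\max\Big\{\sum_{s'\in\mathcal S}\hat P(s'|s,a)x_{s'}-\epsilon(s,a)\max_{s''}x_{s''},\ 0\Big\}\Big\}.$$ *)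

theory Defs
  imports "HOL-Analysis.Analysis"
begin

text \<open>States are the elements of a finite type 's (playing the role of {1,...,N});
  vectors in R^N are functions 's \<Rightarrow> real. Phat s a s' is the estimated substochastic transition probability,
  eps s a the l1 radius.\<close>

definition l1_ball_set ::
  "('s::finite \<Rightarrow> 'a \<Rightarrow> 's \<Rightarrow> real) \<Rightarrow> ('s \<Rightarrow> 'a \<Rightarrow> real) \<Rightarrow> 's \<Rightarrow> 'a \<Rightarrow> ('s \<Rightarrow> real) set" where
  "l1_ball_set Phat eps s a =
     {p. (\<forall>s'. 0 \<le> p s') \<and> (\<Sum>s'\<in>UNIV. p s') \<le> 1 \<and>
         (\<Sum>s'\<in>UNIV. \<bar>p s' - Phat s a s'\<bar>) \<le> eps s a}"

text \<open>The l1 extended value iteration operator (the inner minimum is attained; we write it as Inf).\<close>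
definition EVI_op ::
  "('s::finite \<Rightarrow> 'a set) \<Rightarrow> ('s \<Rightarrow> 'a \<Rightarrow> real) \<Rightarrow> ('s \<Rightarrow> 'a \<Rightarrow> 's \<Rightarrow> real) \<Rightarrow> ('s \<Rightarrow> 'a \<Rightarrow> real)
    \<Rightarrow> ('s \<Rightarrow> real) \<Rightarrow> ('s \<Rightarrow> real)" where
  "EVI_op A c Phat eps x = (\<lambda>s. Min ((\<lambda>a. c s a +
       Inf ((\<lambda>p. \<Sum>s'\<in>UNIV. p s' * x s') ` l1_ball_set Phat eps s a)) ` A s))"

definition Udag0_op ::
  "('s::finite \<Rightarrow> 'a set) \<Rightarrow> ('s \<Rightarrow> 'a \<Rightarrow> real) \<Rightarrow> ('s \<Rightarrow> 'a \<Rightarrow> 's \<Rightarrow> real) \<Rightarrow> ('s \<Rightarrow> 'a \<Rightarrow> real)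
    \<Rightarrow> ('s \<Rightarrow> real) \<Rightarrow> ('s \<Rightarrow> real)" where
  "Udag0_op A c Phat eps x = (\<lambda>s. Min ((\<lambda>a. c s a +
       max ((\<Sum>s'\<in>UNIV. Phat s a s' * x s') - eps s a * Max (range x)) 0) ` A s))"

end

theory Submission
  imports Defs
begin

lemma cont_Min_fam:
  fixes f :: "'b \<Rightarrow> 'x::topological_space \<Rightarrow> real"
  assumes "finite F" "F \<noteq> {}" "\<And>a. a \<in> F \<Longrightarrow> continuous_on S (f a)"
  shows "continuous_on S (\<lambda>x. Min ((\<lambda>a. f a x) ` F))"
  using assms
proof (induction F rule: finite_ne_induct)
  case (singleton a) then show ?case by simp
next
  case (insert a F)
  have "continuous_on S (\<lambda>x. min (f a x) (Min ((\<lambda>a. f a x) ` F)))"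
    using insert by (intro continuous_on_min) auto
  moreover have "\<And>x. Min ((\<lambda>a. f a x) ` insert a F) = min (f a x) (Min ((\<lambda>a. f a x) ` F))"
    using insert by (simp add: Min_insert)
  ultimately show ?case by simp
qed

lemma cont_Max_fam:
  fixes f :: "'b \<Rightarrow> 'x::topological_space \<Rightarrow> real"
  assumes "finite F" "F \<noteq> {}" "\<And>a. a \<in> F \<Longrightarrow> continuous_on S (f a)"
  shows "continuous_on S (\<lambda>x. Max ((\<lambda>a. f a x) ` F))"
  using assms
proof (induction F rule: finite_ne_induct)
  case (singleton a) then show ?case by simp
next
  case (insert a F)
  have "continuous_on S (\<lambda>x. max (f a x) (Max ((\<lambda>a. f a x) ` F)))"
    using insert by (intro continuous_on_max) auto
  moreover have "\<And>x. Max ((\<lambda>a. f a x) ` insert a F) = max (f a x) (Max ((\<lambda>a. f a x) ` F))"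
    using insert by (simp add: Max_insert)
  ultimately show ?case by simp
qed

lemma inner_bound:
  fixes p P x :: "'s::finite \<Rightarrow> real" and e :: real
  assumes "\<And>s. 0 \<le> x s" "\<And>s. 0 \<le> p s" "(\<Sum>s'\<in>UNIV. \<bar>p s' - P s'\<bar>) \<le> e"
  shows "(\<Sum>s'\<in>UNIV. P s' * x s') - e * Max (range x) \<le> (\<Sum>s'\<in>UNIV. p s' * x s')"
proof -
  let ?M = "Max (range x)"
  have M: "x s \<le> ?M" for s by (simp add: Max_ge)
  have M0: "0 \<le> ?M" using M[of undefined] assms(1)[of undefined] by linarith
  have "(\<Sum>s'\<in>UNIV. P s' * x s') - (\<Sum>s'\<in>UNIV. p s' * x s') = (\<Sum>s'\<in>UNIV. (P s' - p s') * x s')"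
    by (simp add: sum_subtractf[symmetric] algebra_simps)
  also have "\<dots> \<le> (\<Sum>s'\<in>UNIV. \<bar>p s' - P s'\<bar> * ?M)"
  proof (rule sum_mono)
    fix s' :: 's
    have "(P s' - p s') * x s' \<le> \<bar>p s' - P s'\<bar> * x s'"
      using assms(1)[of s'] by (intro mult_right_mono) auto
    also have "\<dots> \<le> \<bar>p s' - P s'\<bar> * ?M" using M[of s'] by (intro mult_left_mono) auto
    finally show "(P s' - p s') * x s' \<le> \<bar>p s' - P s'\<bar> * ?M" .
  qed
  also have "\<dots> = (\<Sum>s'\<in>UNIV. \<bar>p s' - P s'\<bar>) * ?M" by (simp add: sum_distrib_right)
  also have "\<dots> \<le> e * ?M" using assms(3) M0 by (intro mult_right_mono) auto
  finally show ?thesis by linarith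
qed

theorem mainTheorem4:
  fixes A :: "'s::finite \<Rightarrow> 'a set"
    and c :: "'s \<Rightarrow> 'a \<Rightarrow> real"
    and Phat :: "'s \<Rightarrow> 'a \<Rightarrow> 's \<Rightarrow> real"
    and eps :: "'s \<Rightarrow> 'a \<Rightarrow> real"
    and J :: "'s \<Rightarrow> real"
  assumes A_fin: "\<And>s. finite (A s)"
    and A_ne: "\<And>s. A s \<noteq> {}"
    and c_range: "\<And>s a. a \<in> A s \<Longrightarrow> 0 \<le> c s a \<and> c s a \<le> 1"
    and P_nonneg: "\<And>s a s'. a \<in> A s \<Longrightarrow> 0 \<le> Phat s a s'"
    and P_sub: "\<And>s a. a \<in> A s \<Longrightarrow> (\<Sum>s'\<in>UNIV. Phat s a s') \<le> 1"
    and eps_nonneg: "\<And>s a. a \<in> A s \<Longrightarrow> 0 \<le> eps s a"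
    and J_fix: "EVI_op A c Phat eps J = J"
    and J_nonneg: "\<And>s. 0 \<le> J s"
  shows "\<exists>x. (\<forall>s. Min (c s ` A s) \<le> x s \<and> x s \<le> J s) \<and> Udag0_op A c Phat eps x = x"
proof -
  define l where "l s = Min (c s ` A s)" for s
  define I where "I s a = Inf ((\<lambda>p. \<Sum>s'\<in>UNIV. p s' * J s') ` l1_ball_set Phat eps s a)" for s a
  define T where "T = Udag0_op A c Phat eps"
  have l0: "0 \<le> l s" for s
    unfolding l_def using A_fin A_ne c_range by (auto simp: Min_ge_iff)
  have ball_ne: "Phat s a \<in> l1_ball_set Phat eps s a" if "a \<in> A s" for s a
    using that P_nonneg P_sub eps_nonneg by (auto simp: l1_ball_set_def)
  have Jeq: "J s = Min ((\<lambda>a. c s a + I s a) ` A s)" for s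
    using fun_cong[OF J_fix, of s] unfolding EVI_op_def I_def by simp
  have Ige: "t \<le> I s a" if "a \<in> A s" "\<And>p. p \<in> l1_ball_set Phat eps s a \<Longrightarrow> t \<le> (\<Sum>s'\<in>UNIV. p s' * J s')" for s a t
    unfolding I_def using that ball_ne[OF that(1)] by (intro cInf_greatest) auto
  have I0: "0 \<le> I s a" if "a \<in> A s" for s a
    using that by (intro Ige) (auto simp: l1_ball_set_def J_nonneg intro!: sum_nonneg)
  have lJ: "l s \<le> J s" for s
  proof -
    have "l s \<le> c s a + I s a" if "a \<in> A s" for a
    proof -
      have "l s \<le> c s a" unfolding l_def using that A_fin by (intro Min_le) auto
      then show ?thesis using I0[OF that] by linarith
    qed
    then show ?thesis unfolding Jeq using A_fin A_ne by (simp add: Min_ge_iff)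
  qed
  have Tlow: "l s \<le> T x s" for x s
  proof -
    have "l s \<le> c s a + max ((\<Sum>s'\<in>UNIV. Phat s a s' * x s') - eps s a * Max (range x)) 0" if "a \<in> A s" for a
    proof -
      have "l s \<le> c s a" unfolding l_def using that A_fin by (intro Min_le) auto
      then show ?thesis by linarith
    qed
    then show ?thesis unfolding T_def Udag0_op_def using A_fin A_ne by (simp add: Min_ge_iff)
  qed
  have Tup: "T x s \<le> J s" if x: "\<And>s. l s \<le> x s \<and> x s \<le> J s" for x s
  proof -
    have x0: "0 \<le> x s" for s using x[of s] l0[of s] by linarith
    have "J s \<in> (\<lambda>a. c s a + I s a) ` A s" unfolding Jeq using A_fin A_ne by (intro Min_in) auto
    then obtain a where a: "a \<in> A s" "J s = c s a + I s a" by auto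
    have "max ((\<Sum>s'\<in>UNIV. Phat s a s' * x s') - eps s a * Max (range x)) 0 \<le> I s a"
    proof (rule Ige[OF a(1)])
      fix p assume p: "p \<in> l1_ball_set Phat eps s a"
      have pn: "\<And>s'. 0 \<le> p s'" using p by (auto simp: l1_ball_set_def)
      have "(\<Sum>s'\<in>UNIV. Phat s a s' * x s') - eps s a * Max (range x) \<le> (\<Sum>s'\<in>UNIV. p s' * x s')"
        using p x0 by (intro inner_bound) (auto simp: l1_ball_set_def)
      also have "\<dots> \<le> (\<Sum>s'\<in>UNIV. p s' * J s')"
        using pn x by (intro sum_mono mult_left_mono) auto
      finally show "max ((\<Sum>s'\<in>UNIV. Phat s a s' * x s') - eps s a * Max (range x)) 0 \<le> (\<Sum>s'\<in>UNIV. p s' * J s')"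
        using pn J_nonneg by (auto intro!: sum_nonneg)
    qed
    moreover have "T x s \<le> c s a + max ((\<Sum>s'\<in>UNIV. Phat s a s' * x s') - eps s a * Max (range x)) 0"
      unfolding T_def Udag0_op_def using A_fin a(1) by (intro Min_le) auto
    ultimately show ?thesis using a(2) by linarith
  qed
  define g :: "real^'s \<Rightarrow> real^'s" where "g v = (\<chi> s. T (vec_nth v) s)" for v
  define S :: "(real^'s) set" where "S = cbox (\<chi> s. l s) (\<chi> s. J s)"
  have memS: "v \<in> S \<longleftrightarrow> (\<forall>s. l s \<le> v $ s \<and> v $ s \<le> J s)" for v
    unfolding S_def mem_box_cart(2) by simp
  have cont: "continuous_on UNIV g"
    unfolding g_def T_def Udag0_op_def
  proof (intro continuous_on_vec_lambda cont_Min_fam A_fin A_ne)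
    fix s a
    have cM: "continuous_on UNIV (\<lambda>v::real^'s. Max ((\<lambda>i. v $ i) ` UNIV))"
      by (intro cont_Max_fam continuous_on_component continuous_on_id) auto
    show "continuous_on UNIV (\<lambda>v::real^'s. c s a + max ((\<Sum>s'\<in>UNIV. Phat s a s' * v $ s') - eps s a * Max (range (($) v))) 0)"
      by (intro continuous_intros cM)
  qed
  have "(\<chi> s. l s) \<in> S" using lJ by (simp add: memS)
  then have "S \<noteq> {}" by blast
  moreover have "g \<in> S \<rightarrow> S" using Tlow Tup by (auto simp: memS g_def)
  moreover have "compact S" "convex S" unfolding S_def by simp_all
  moreover have "continuous_on S g" using continuous_on_subset[OF cont] by blast
  ultimately obtain v where v: "v \<in> S" "g v = v"
    using brouwer[of S g] by blast
  have "T (vec_nth v) = vec_nth v"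
  proof
    fix s show "T (vec_nth v) s = v $ s" using arg_cong[OF v(2), of "\<lambda>w. w $ s"] by (simp add: g_def)
  qed
  then show ?thesis using v(1) unfolding memS l_def T_def by blast
qed

end
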